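(* Let $c\in\mathbb{R}^n$, $A\in\mathbb{R}^{m\times n}$, $b\in\mathbb{R}^m$ and $\emptyset\neq I\subseteq\{1,\dots,n\}$, and consider the binary mixed-integer linear problem $\min\{c^\top x : Ax\ge b,\ x_i\in\{0,1\} \text{ for } i\in I\}$. Let $X:=\{x\in\mathbb{R}^n : Ax\ge b,\ x_I\in[0,1]^I\}\neq\emptyset$, $Y:=\{0,1\}^I$, and consider $$\min_{x,y}\ \|x_I-y\|_1 \quad\text{s.t.}\quad x\in X,\ y\in Y. \qquad (\ast)$$ The idealized feasibility pump is the following method: take $x^0\in\arg\min\{c^\top x: x\in X\}$ and $y^0$ the componentwise rounding of $x^0_I$ to the nearest integer; for $k=0,1,\dots$ compute $x^{k+1}\in\arg\min_{x\in X}\|x_I-y^k\|_1$ (a global minimizer) and $y^{k+1}\in\arg\min_{y\in Y}\|x^{k+1}_I-y\|_1$ (i.e., a rounding of $x^{k+1}_I$), with ties in the $y$-step resolved by choosing the lexicographically minimal minimizer; stop as soon as the current iterate is a partial minimum of $(\ast)$ (no random perturbations are applied). Then the idealized feasibility pump terminates at a partial minimum $(x^*,y^* )$ of $(\ast)$ after a finite number of iterations. If this partial minimum satisfies $\|x^*_I-y^*\|_1=0$, then the point $(x^*,y^* )$ is feasible for the binary mixed-integer linear problem (i.e., $x^*$ is feasible for it).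
   Context: A point $(x^*,y^* )\in X\times Y$ is a partial minimum of $(\ast)$ if $\|x^*_I-y^*\|_1\le\|x_I-y^*\|_1$ for all $x\in X$ and $\|x^*_I-y^*\|_1\le \|x^*_I-y\|_1$ for all $y\in Y$. $x_I$ denotes the subvector of $x$ with components indexed by $I$. *)

theory Defs
  imports "HOL-Analysis.Analysis"
begin

text \<open>Vectors in R^n are rendered as real^'n, matrices in R^{m x n} as real^'n^'m.
  The index type 'n carries a linear order (used for the lexicographic tie-breaking).\<close>

definition feasX :: "real^'n^'m \<Rightarrow> real^'m \<Rightarrow> 'n set \<Rightarrow> (real^'n) set" where
  "feasX A b I = {x. (\<forall>j. b $ j \<le> (A *v x) $ j) \<and> (\<forall>i\<in>I. 0 \<le> x $ i \<and> x $ i \<le> 1)}"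

text \<open>Y = {0,1}^I; a point of Y is a vector that is 0/1 on I and 0 off I.\<close>
definition binY :: "'n set \<Rightarrow> (real^'n) set" where
  "binY I = {y. (\<forall>i\<in>I. y $ i \<in> {0, 1}) \<and> (\<forall>i. i \<notin> I \<longrightarrow> y $ i = 0)}"

definition distI :: "'n set \<Rightarrow> real^'n \<Rightarrow> real^'n \<Rightarrow> real" where
  "distI I x y = (\<Sum>i\<in>I. \<bar>x $ i - y $ i\<bar>)"

definition partial_min :: "real^'n^'m \<Rightarrow> real^'m \<Rightarrow> 'n set \<Rightarrow> real^'n \<Rightarrow> real^'n \<Rightarrow> bool" where
  "partial_min A b I x y \<longleftrightarrow> x \<in> feasX A b I \<and> y \<in> binY I \<and>
     (\<forall>x'\<in>feasX A b I. distI I x y \<le> distI I x' y) \<and>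
     (\<forall>y'\<in>binY I. distI I x y \<le> distI I x y')"

definition is_argmin_on :: "('a \<Rightarrow> real) \<Rightarrow> 'a set \<Rightarrow> 'a \<Rightarrow> bool" where
  "is_argmin_on f S z \<longleftrightarrow> z \<in> S \<and> (\<forall>z'\<in>S. f z \<le> f z')"

definition lex_less :: "('n::{finite,linorder}) set \<Rightarrow> real^('n::{finite,linorder}) \<Rightarrow> real^('n::{finite,linorder}) \<Rightarrow> bool" where
  "lex_less I y y' \<longleftrightarrow> (\<exists>i\<in>I. y $ i < y' $ i \<and> (\<forall>j\<in>I. j < i \<longrightarrow> y $ j = y' $ j))"

definition lex_min_in :: "('n::{finite,linorder}) set \<Rightarrow> (real^('n::{finite,linorder})) set \<Rightarrow> real^('n::{finite,linorder}) \<Rightarrow> bool" where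
  "lex_min_in I S y \<longleftrightarrow> y \<in> S \<and> (\<forall>y'\<in>S. y' \<noteq> y \<longrightarrow> lex_less I y y')"

definition milp_feasible :: "real^'n^'m \<Rightarrow> real^'m \<Rightarrow> 'n set \<Rightarrow> real^'n \<Rightarrow> bool" where
  "milp_feasible A b I x \<longleftrightarrow> (\<forall>j. b $ j \<le> (A *v x) $ j) \<and> (\<forall>i\<in>I. x $ i \<in> {0, 1})"

end

theory Submission
  imports Defs
begin

lemma finite_binY: "finite (binY (I::'n::finite set))"
proof -
  have "binY I \<subseteq> (\<lambda>f. \<chi> i. f i) ` (PiE UNIV (\<lambda>_. {0::real,1}))"
  proof
    fix y assume "y \<in> binY I"
    hence h: "\<forall>i. y $ i \<in> {0,1}" unfolding binY_def by auto
    have "restrict (\<lambda>i. y $ i) UNIV \<in> PiE UNIV (\<lambda>_. {0::real,1})" using h by auto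
    moreover have "y = (\<chi> i. restrict (\<lambda>i. y $ i) UNIV i)" by (simp add: vec_eq_iff)
    ultimately show "y \<in> (\<lambda>f. \<chi> i. f i) ` (PiE UNIV (\<lambda>_. {0::real,1}))" by blast
  qed
  moreover have "finite (PiE (UNIV::'n set) (\<lambda>_. {0::real,1}))" by (rule finite_PiE) auto
  ultimately show ?thesis using finite_subset by blast
qed

theorem mainTheorem2:
  fixes c :: "real^('n::{finite,linorder})"
    and A :: "real^('n::{finite,linorder})^('m::finite)"
    and b :: "real^('m::finite)"
    and I :: "('n::{finite,linorder}) set"
    and x y :: "nat \<Rightarrow> real^('n::{finite,linorder})"
  assumes "I \<noteq> {}"
    and "feasX A b I \<noteq> {}"
    and x0: "is_argmin_on (\<lambda>x. c \<bullet> x) (feasX A b I) (x 0)"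
    and y0: "is_argmin_on (distI I (x 0)) (binY I) (y 0)"
    and xstep: "\<And>k. \<not> partial_min A b I (x k) (y k) \<Longrightarrow>
                  is_argmin_on (\<lambda>z. distI I z (y k)) (feasX A b I) (x (Suc k))"
    and ystep: "\<And>k. \<not> partial_min A b I (x k) (y k) \<Longrightarrow>
                  lex_min_in I {w. is_argmin_on (distI I (x (Suc k))) (binY I) w} (y (Suc k))"
  shows "\<exists>K. partial_min A b I (x K) (y K) \<and> (\<forall>k<K. \<not> partial_min A b I (x k) (y k)) \<and>
           (distI I (x K) (y K) = 0 \<longrightarrow> milp_feasible A b I (x K))"
proof -
  let ?P = "\<lambda>k. partial_min A b I (x k) (y k)"
  let ?X = "feasX A b I"
  let ?d = "distI I"
  have ex: "\<exists>k. ?P k"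
  proof (rule ccontr)
    assume "\<not> (\<exists>k. ?P k)"
    hence np: "\<And>k. \<not> ?P k" by blast
    have xarg: "\<And>k. is_argmin_on (\<lambda>z. ?d z (y k)) ?X (x (Suc k))" using xstep np by blast
    have yarg: "\<And>k. is_argmin_on (?d (x k)) (binY I) (y k)"
    proof -
      fix k show "is_argmin_on (?d (x k)) (binY I) (y k)"
      proof (cases k)
        case 0 thus ?thesis using y0 by simp
      next
        case (Suc j) thus ?thesis using ystep[OF np[of j]] unfolding lex_min_in_def by simp
      qed
    qed
    have xin: "\<And>k. x k \<in> ?X"
    proof -
      fix k show "x k \<in> ?X"
        using x0 xarg[of "k - 1"] unfolding is_argmin_on_def by (cases k) auto
    qed
    have strict: "\<And>k. ?d (x (Suc k)) (y k) < ?d (x k) (y k)"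
    proof -
      fix k
      have "\<not> (\<forall>x'\<in>?X. ?d (x k) (y k) \<le> ?d x' (y k))"
        using np[of k] xin[of k] yarg[of k] unfolding partial_min_def is_argmin_on_def by auto
      then obtain x' where "x' \<in> ?X" "?d x' (y k) < ?d (x k) (y k)" by (auto simp: not_le)
      thus "?d (x (Suc k)) (y k) < ?d (x k) (y k)" using xarg[of k] unfolding is_argmin_on_def by force
    qed
    define h where "h k = ?d (x (Suc k)) (y k)" for k
    have hdec: "h (Suc k) < h k" for k
    proof -
      have "h (Suc k) < ?d (x (Suc k)) (y (Suc k))" using strict[of "Suc k"] h_def by simp
      also have "\<dots> \<le> ?d (x (Suc k)) (y k)"
        using yarg[of "Suc k"] yarg[of k] unfolding is_argmin_on_def by auto
      finally show ?thesis using h_def by simp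
    qed
    have hanti: "j < k \<Longrightarrow> h k < h j" for j k
    proof (induction k)
      case 0 thus ?case by simp
    next
      case (Suc k)
      thus ?case using hdec[of k] by (cases "j = k") auto
    qed
    have hy: "y j = y k \<Longrightarrow> h j = h k" for j k
    proof -
      assume e: "y j = y k"
      have "h j \<le> h k" using xarg[of j] xarg[of k] e unfolding h_def is_argmin_on_def by auto
      moreover have "h k \<le> h j" using xarg[of j] xarg[of k] e unfolding h_def is_argmin_on_def by auto
      ultimately show ?thesis by simp
    qed
    have "inj y"
    proof (rule injI)
      fix j k assume "y j = y k"
      hence "h j = h k" by (rule hy)
      thus "j = k" using hanti[of j k] hanti[of k j] by (cases j k rule: linorder_cases) auto
    qed
    moreover have "range y \<subseteq> binY I" using yarg unfolding is_argmin_on_def by auto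
    ultimately have "finite (UNIV::nat set)"
      using finite_binY[of I] by (meson finite_imageD finite_subset)
    thus False by simp
  qed
  define K where "K = (LEAST k. ?P k)"
  have PK: "?P K" unfolding K_def using ex by (rule LeastI_ex)
  have before: "\<forall>k<K. \<not> ?P k" unfolding K_def using not_less_Least by blast
  have feas: "milp_feasible A b I (x K)" if z: "?d (x K) (y K) = 0"
  proof -
    have xK: "x K \<in> ?X" and yK: "y K \<in> binY I" using PK unfolding partial_min_def by auto
    have "\<forall>i\<in>I. \<bar>x K $ i - y K $ i\<bar> = 0"
      using z unfolding distI_def by (subst (asm) sum_nonneg_eq_0_iff) auto
    hence "\<forall>i\<in>I. x K $ i = y K $ i" by auto
    thus ?thesis using xK yK unfolding milp_feasible_def feasX_def binY_def by auto
  qed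
  show ?thesis using PK before feas by blast
qed

end
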